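(* For integers $n\ge1$ and $m\ge1$, let $Q_n=\langle a,b\mid a^n=b^2=(ab)^2\rangle$ be the generalized quaternion group of order $4n$. Then $$d^\wedge_m(Q_n)=\begin{cases}\dfrac{3n+\gcd(m,n)}{4n}, & m\text{ even},\\[2mm] \dfrac{n+\gcd(m,n)+2}{4n}, & m\text{ odd}.\end{cases}$$ In particular $d^\wedge_m(Q_n)=d^\wedge_m(D_{2n})$ for all $m,n\ge1$, where $D_{2n}=\langle a,b\mid a^n=b^2=1,\ b^{-1}ab=a^{-1}\rangle$.
   Context: For a finite group $G$ (acting on itself by conjugation ${}^g x=gxg^{-1}$), the exterior square $G\wedge G$ is the group generated by symbols $x\wedge y$ ($x,y\in G$) subject to $xx'\wedge y=({}^x x'\wedge {}^x y)(x\wedge y)$, $x\wedge yy'=(x\wedge y)({}^y x\wedge {}^y y')$ and $x\wedge x=1$. The $m$-th exterior degree is $d^\wedge_m(G)=|\{(x,y)\in G\times G: x^m\wedge y=1_{G\wedge G}\}|/|G|^2$. *)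

theory Defs
  imports "HOL-Algebra.Algebra"
begin

definition conjg :: "('a, 'b) monoid_scheme \<Rightarrow> 'a \<Rightarrow> 'a \<Rightarrow> 'a" where
  "conjg G g x = g \<otimes>\<^bsub>G\<^esub> x \<otimes>\<^bsub>G\<^esub> inv\<^bsub>G\<^esub> g"

text \<open>The exterior square G \<and> G as a presented group. A word is a list of letters
  (x, y, s): s = True stands for the generator x \<and> y, s = False for its inverse.
  ext_eq G is the congruence on words generated by free cancellation and the
  defining relations; G \<and> G is the quotient monoid of words by it (a group).\<close>
inductive ext_eq :: "('a, 'b) monoid_scheme \<Rightarrow> ('a \<times> 'a \<times> bool) list \<Rightarrow> ('a \<times> 'a \<times> bool) list \<Rightarrow> bool"
  for G where
  refl: "ext_eq G w w"
| sym: "ext_eq G u w \<Longrightarrow> ext_eq G w u"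
| trans: "ext_eq G u v \<Longrightarrow> ext_eq G v w \<Longrightarrow> ext_eq G u w"
| cong: "ext_eq G u w \<Longrightarrow> ext_eq G (p @ u @ q) (p @ w @ q)"
| cancel1: "x \<in> carrier G \<Longrightarrow> y \<in> carrier G \<Longrightarrow> ext_eq G [(x, y, True), (x, y, False)] []"
| cancel2: "x \<in> carrier G \<Longrightarrow> y \<in> carrier G \<Longrightarrow> ext_eq G [(x, y, False), (x, y, True)] []"
| rel_left: "x \<in> carrier G \<Longrightarrow> x' \<in> carrier G \<Longrightarrow> y \<in> carrier G \<Longrightarrow>
     ext_eq G [(x \<otimes>\<^bsub>G\<^esub> x', y, True)] [(conjg G x x', conjg G x y, True), (x, y, True)]"
| rel_right: "x \<in> carrier G \<Longrightarrow> y \<in> carrier G \<Longrightarrow> y' \<in> carrier G \<Longrightarrow>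
     ext_eq G [(x, y \<otimes>\<^bsub>G\<^esub> y', True)] [(x, y, True), (conjg G y x, conjg G y y', True)]"
| rel_diag: "x \<in> carrier G \<Longrightarrow> ext_eq G [(x, x, True)] []"

definition wedge_trivial :: "('a, 'b) monoid_scheme \<Rightarrow> 'a \<Rightarrow> 'a \<Rightarrow> bool" where
  "wedge_trivial G x y \<longleftrightarrow> ext_eq G [(x, y, True)] []"

definition ext_degree :: "nat \<Rightarrow> ('a, 'b) monoid_scheme \<Rightarrow> real" where
  "ext_degree m G =
     real (card {(x, y). x \<in> carrier G \<and> y \<in> carrier G \<and> wedge_trivial G (x [^]\<^bsub>G\<^esub> m) y})
     / real (card (carrier G)) ^ 2"

end

theory Submission
  imports Defs
begin

lemmas [trans] = ext_eq.trans

lemma ee_app: "ext_eq G u u' \<Longrightarrow> ext_eq G v v' \<Longrightarrow> ext_eq G (u@v) (u'@v')"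
proof -
  assume a: "ext_eq G u u'" and b: "ext_eq G v v'"
  have "ext_eq G ([]@u@v) ([]@u'@v)" by (rule ext_eq.cong[OF a])
  moreover have "ext_eq G (u'@v@[]) (u'@v'@[])" by (rule ext_eq.cong[OF b])
  ultimately show ?thesis by (auto intro: ext_eq.trans)
qed

context group begin

lemma conjg_closed[simp]: "g \<in> carrier G \<Longrightarrow> x \<in> carrier G \<Longrightarrow> conjg G g x \<in> carrier G"
  by (simp add: conjg_def)

lemma conjg_comm: "g \<in> carrier G \<Longrightarrow> x \<in> carrier G \<Longrightarrow> g \<otimes> x = x \<otimes> g \<Longrightarrow> conjg G g x = x"
  by (simp add: conjg_def m_assoc)

lemma conjg_one[simp]: "x \<in> carrier G \<Longrightarrow> conjg G \<one> x = x"
  by (simp add: conjg_def)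

lemma dup_triv:
  assumes "ext_eq G [t] [t, t]" and "t = (x,y,True)" "x \<in> carrier G" "y \<in> carrier G"
  shows "ext_eq G [t] []"
proof -
  have h1: "ext_eq G ([(x,y,False)] @ [t]) ([(x,y,False)] @ [t,t])"
    by (rule ee_app[OF ext_eq.refl assms(1)])
  have h2: "ext_eq G [(x,y,False), t] []" using assms ext_eq.cancel2 by simp
  have h3: "ext_eq G ([(x,y,False), t] @ [t]) ([] @ [t])"
    by (rule ee_app[OF h2 ext_eq.refl])
  have "ext_eq G [t] ([(x,y,False)] @ [t,t])" using ext_eq.sym[OF h3] by simp
  also have "ext_eq G ... [(x,y,False), t]" using ext_eq.sym[OF h1] by simp
  finally have "ext_eq G [t] [(x,y,False), t]" .
  then show ?thesis using h2 by (rule ext_eq.trans)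
qed

lemma one_left: "y \<in> carrier G \<Longrightarrow> ext_eq G [(\<one>,y,True)] []"
  using ext_eq.rel_left[where G=G and x="\<one>" and x'="\<one>" and y=y] by (intro dup_triv[of "(\<one>,y,True)" \<one> y]) auto

lemma one_right: "x \<in> carrier G \<Longrightarrow> ext_eq G [(x,\<one>,True)] []"
  using ext_eq.rel_right[where G=G and x=x and y="\<one>" and y'="\<one>"] by (intro dup_triv[of "(x,\<one>,True)" x \<one>]) auto

lemma cyc_left: "g \<in> carrier G \<Longrightarrow> ext_eq G [(g, g [^] (q::nat), True)] []"
proof (induction q)
  case 0 then show ?case by (simp add: one_right)
next
  case (Suc q)
  have "ext_eq G [(g, g \<otimes> g [^] q, True)] [(g,g,True), (conjg G g g, conjg G g (g [^] q), True)]"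
    using Suc by (intro ext_eq.rel_right) auto
  moreover have "conjg G g g = g" "conjg G g (g [^] q) = g [^] q"
    using Suc by (auto intro!: conjg_comm simp del: nat_pow_Suc simp: nat_pow_Suc2[symmetric] nat_pow_Suc)
  moreover have "ext_eq G ([(g,g,True)] @ [(g, g [^] q, True)]) ([] @ [])"
    using Suc by (intro ee_app ext_eq.rel_diag) auto
  ultimately have "ext_eq G [(g, g \<otimes> g [^] q, True)] []" by (simp only:) (erule ext_eq.trans, simp)
  then show ?case by (simp only: nat_pow_Suc2[OF Suc.prems])
qed

lemma cyc_nat: "g \<in> carrier G \<Longrightarrow> ext_eq G [(g [^] (p::nat), g [^] (q::nat), True)] []"
proof (induction p)
  case 0 then show ?case by (simp add: one_left)
next
  case (Suc p)
  have "ext_eq G [(g \<otimes> g [^] p, g [^] q, True)] [(conjg G g (g [^] p), conjg G g (g [^] q), True), (g, g [^] q, True)]"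
    using Suc by (intro ext_eq.rel_left) auto
  moreover have "conjg G g (g [^] p) = g [^] p" "conjg G g (g [^] q) = g [^] q"
    using Suc by (auto intro!: conjg_comm simp del: nat_pow_Suc simp: nat_pow_Suc2[symmetric] nat_pow_Suc)
  moreover have "ext_eq G ([(g [^] p, g [^] q, True)] @ [(g, g [^] q, True)]) ([] @ [])"
    using Suc cyc_left by (intro ee_app) auto
  ultimately have "ext_eq G [(g \<otimes> g [^] p, g [^] q, True)] []" by (simp only:) (erule ext_eq.trans, simp)
  then show ?case by (simp only: nat_pow_Suc2[OF Suc.prems])
qed

lemma pow_mod_ord: "finite (carrier G) \<Longrightarrow> g \<in> carrier G \<Longrightarrow> g [^] (p::int) = g [^] (nat (p mod int (ord g)))"
proof -
  assume f: "finite (carrier G)" and g: "g \<in> carrier G"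
  have o: "ord g \<ge> 1" using ord_ge_1[OF f g] .
  have "g [^] (nat (p mod int (ord g))) = g [^] (p mod int (ord g))"
    using o by (intro pow_nat) simp
  also have "\<dots> = g [^] p" using g
    by (subst int_pow_eq) (auto simp: mod_eq_dvd_iff[symmetric])
  finally show ?thesis by simp
qed

lemma cyc_int: "finite (carrier G) \<Longrightarrow> g \<in> carrier G \<Longrightarrow> ext_eq G [(g [^] (p::int), g [^] (q::int), True)] []"
  by (simp add: pow_mod_ord[of g p] pow_mod_ord[of g q] cyc_nat)

lemma sr_pow_nat:
  assumes r: "r \<in> carrier G" and s: "s \<in> carrier G" and sr: "s \<otimes> r = inv r \<otimes> s"
  shows "s \<otimes> r [^] (k::nat) = inv (r [^] k) \<otimes> s"
proof (induction k)
  case 0 then show ?case using s by simp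
next
  case (Suc k)
  have "s \<otimes> r [^] Suc k = (s \<otimes> r [^] k) \<otimes> r" using r s by (simp add: m_assoc)
  also have "\<dots> = inv (r [^] k) \<otimes> (s \<otimes> r)" using Suc r s by (simp add: m_assoc)
  also have "\<dots> = (inv (r [^] k) \<otimes> inv r) \<otimes> s" using sr r s by (simp add: m_assoc)
  also have "inv (r [^] k) \<otimes> inv r = inv (r [^] Suc k)"
    using r by (simp add: inv_mult_group[symmetric] nat_pow_Suc2[symmetric] del: nat_pow_Suc)
  finally show ?case .
qed

lemma sr_pow_int:
  assumes r: "r \<in> carrier G" and s: "s \<in> carrier G" and sr: "s \<otimes> r = inv r \<otimes> s"
  shows "s \<otimes> r [^] (i::int) = r [^] (-i) \<otimes> s"
proof (cases "i \<ge> 0")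
  case True
  then have "r [^] i = r [^] (nat i)" by (simp add: pow_nat)
  moreover have "r [^] (-i) = inv (r [^] (nat i))" using r True by (simp add: int_pow_neg pow_nat)
  ultimately show ?thesis using sr_pow_nat[OF assms] by simp
next
  case False
  define k where "k = nat (-i)"
  have i: "i = - int k" using False k_def by simp
  have e: "s \<otimes> r [^] k = inv (r [^] k) \<otimes> s" by (rule sr_pow_nat[OF assms])
  have "s \<otimes> inv (r [^] k) = r [^] k \<otimes> s"
  proof -
    have h: "r [^] k \<otimes> s \<otimes> r [^] k = s"
      using e r s by (simp add: m_assoc) (simp add: m_assoc[symmetric])
    have "s \<otimes> inv (r [^] k) = r [^] k \<otimes> s \<otimes> r [^] k \<otimes> inv (r [^] k)" by (simp add: h)
    also have "\<dots> = r [^] k \<otimes> s" using r s by (simp add: m_assoc)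
    finally show ?thesis .
  qed
  then show ?thesis using r s by (simp add: i int_pow_neg_int int_pow_int)
qed

end



locale dq = group G for G (structure) +
  fixes r s :: 'a and N n :: nat
  assumes r[simp]: "r \<in> carrier G" and s[simp]: "s \<in> carrier G"
  and gen: "carrier G = generate G {r, s}"
  and rN: "r [^] N = \<one>"
  and rn: "r [^] n = s [^] (2::nat)"
  and sr: "s \<otimes> r = inv r \<otimes> s"
  and cardG: "card (carrier G) = 2 * N"
  and Nn: "N = n \<or> N = 2 * n" and n1: "1 \<le> n"
begin

lemma N1: "1 \<le> N" using Nn n1 by auto
lemma nN: "int n dvd int N" using Nn by auto
lemma fin: "finite (carrier G)" using N1 by (intro card_ge_0_finite) (simp add: cardG)

lemma rdiff: "r [^] (i - j) = r [^] (i::int) \<otimes> r [^] (-j)"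
  using int_pow_mult[of r i "-j"] by simp

definition el :: "int \<Rightarrow> bool \<Rightarrow> 'a" where
  "el i e = r [^] i \<otimes> (if e then s else \<one>)"

lemma el_closed[simp]: "el i e \<in> carrier G" by (simp add: el_def)

lemma ss: "s \<otimes> s = r [^] (int n)"
  using rn by (simp add: int_pow_int numeral_2_eq_2)

lemma el_mult: "el i e \<otimes> el j f = el (i + (if e then -j else j) + (if e \<and> f then int n else 0)) (e \<noteq> f)"
proof (cases e)
  case False
  then show ?thesis by (cases f) (simp_all add: el_def int_pow_mult m_assoc)
next
  case True
  have "el i e \<otimes> el j f = r [^] i \<otimes> (s \<otimes> r [^] j) \<otimes> (if f then s else \<one>)"
    using True by (simp add: el_def m_assoc)
  also have "\<dots> = r [^] i \<otimes> r [^] (-j) \<otimes> (s \<otimes> (if f then s else \<one>))"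
    by (simp add: sr_pow_int[OF r s sr] m_assoc)
  finally show ?thesis using True
    by (cases f) (simp_all add: el_def int_pow_mult m_assoc ss rdiff)
qed

lemma r_mod: "r [^] (i::int) = r [^] (i mod int N)"
proof -
  have "r [^] (int N) = \<one>" using rN by (simp add: int_pow_int)
  then have h: "r [^] (int N * (i div int N)) = \<one>" by (simp add: int_pow_pow[symmetric])
  have "r [^] i = r [^] (int N * (i div int N) + i mod int N)" by simp
  also have "\<dots> = r [^] (int N * (i div int N)) \<otimes> r [^] (i mod int N)" by (rule int_pow_mult) simp
  also have "\<dots> = r [^] (i mod int N)" by (simp add: h)
  finally show ?thesis .
qed

lemma r2n: "r [^] (2 * int n) = \<one>"
proof -
  have "(2 * int n) mod int N = 0" using Nn by auto
  then show ?thesis using r_mod[of "2 * int n"] by simp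
qed

lemma el_one: "el 0 False = \<one>" by (simp add: el_def)

lemma el_inv: "inv (el i e) = el (if e then i + int n else -i) e"
proof (rule inv_equality)
  have "el (if e then i + int n else -i) e \<otimes> el i e = el (if e then 2 * int n else 0) False"
    by (cases e) (simp_all add: el_mult)
  also have "\<dots> = \<one>" by (simp add: el_def r2n)
  finally show "el (if e then i + int n else -i) e \<otimes> el i e = \<one>" .
qed simp_all

lemma el_mod: "el i e = el (i mod int N) e"
  by (simp add: el_def r_mod[of i])

definition I :: "(int \<times> bool) set" where "I = {0..<int N} \<times> UNIV"

lemma finI: "finite I" by (simp add: I_def)
lemma cardI: "card I = 2 * N" by (simp add: I_def card_cartesian_product)

lemma el_range[simp]: "el i e \<in> range (case_prod el)"
  by (rule image_eqI[of _ _ "(i,e)"]) simp_all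

lemma gen_sub: "generate G {r, s} \<subseteq> range (case_prod el)"
proof
  fix x assume "x \<in> generate G {r, s}"
  then show "x \<in> range (case_prod el)"
  proof induction
    case one then show ?case by (rule image_eqI[of _ _ "(0,False)"]) (simp_all add: el_one)
  next
    case (incl h)
    then show ?case
    proof
      assume "h = r" then show ?thesis by (intro image_eqI[of _ _ "(1,False)"]) (simp_all add: el_def)
    next
      assume "h \<in> {s}" then show ?thesis by (intro image_eqI[of _ _ "(0,True)"]) (simp_all add: el_def)
    qed
  next
    case (inv h)
    then show ?case
    proof
      assume "h = r" then show ?thesis
        by (intro image_eqI[of _ _ "(-1,False)"]) (simp_all add: el_def int_pow_neg)
    next
      assume "h \<in> {s}" then have "inv h = el (int n) True"
        using el_inv[of 0 True] by (simp add: el_def)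
      then show ?thesis by (intro image_eqI[of _ _ "(int n,True)"]) simp_all
    qed
  next
    case (eng h1 h2)
    then obtain i e j f where "h1 = el i e" "h2 = el j f" by auto
    then show ?case by (simp only: el_mult el_range)
  qed
qed

lemma surj: "carrier G = case_prod el ` I"
proof
  show "carrier G \<subseteq> case_prod el ` I"
  proof
    fix x assume "x \<in> carrier G"
    then obtain i e where x: "x = el i e" using gen gen_sub by auto
    show "x \<in> case_prod el ` I"
      using N1 by (intro image_eqI[of _ _ "(i mod int N, e)"]) (simp_all add: x el_mod[of i] I_def)
  qed
qed auto

lemma inj: "inj_on (case_prod el) I"
  by (rule eq_card_imp_inj_on[OF finI]) (metis surj cardG cardI)

lemma el_eq: "el i e = el j f \<longleftrightarrow> e = f \<and> i mod int N = j mod int N"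
proof
  assume h: "el i e = el j f"
  have "el (i mod int N) e = el (j mod int N) f" using h el_mod[of i e] el_mod[of j f] by simp
  moreover have "(i mod int N, e) \<in> I" "(j mod int N, f) \<in> I" using N1 by (auto simp: I_def)
  ultimately have "(i mod int N, e) = (j mod int N, f)"
    using inj_onD[OF inj, of "(i mod int N, e)" "(j mod int N, f)"] by simp
  then show "e = f \<and> i mod int N = j mod int N" by simp
next
  assume "e = f \<and> i mod int N = j mod int N"
  then show "el i e = el j f" using el_mod[of i e] el_mod[of j f] by simp
qed

end



context dq begin

definition rep :: "'a \<Rightarrow> int \<times> bool" where
  "rep x = (SOME p. p \<in> I \<and> case_prod el p = x)"

lemma rep: "x \<in> carrier G \<Longrightarrow> rep x \<in> I \<and> case_prod el (rep x) = x"
  unfolding rep_def by (rule someI_ex) (use surj in auto)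

lemma rep_el: "rep (el i e) = (i mod int N, e)"
proof -
  obtain k f where kf: "rep (el i e) = (k, f)" by fastforce
  have "(k,f) \<in> I" "el k f = el i e" using rep[of "el i e"] kf by auto
  then show ?thesis using kf el_eq[of k f i e] by (auto simp: I_def)
qed

definition kap :: "'a \<Rightarrow> int" where "kap x = fst (rep x)"
definition eps :: "'a \<Rightarrow> bool" where "eps x = snd (rep x)"

definition phi :: "'a \<Rightarrow> 'a \<Rightarrow> int" where
  "phi x y = (if eps y then kap x else 0) - (if eps x then kap y else 0)"

definition P :: "int \<Rightarrow> bool \<Rightarrow> int \<Rightarrow> bool \<Rightarrow> int" where
  "P i e j f = (if f then i else 0) - (if e then j else 0)"

lemma md: "int n dvd (i mod int N - i)"
proof -
  have "int N dvd (i mod int N - i)" by (simp add: mod_eq_dvd_iff[symmetric])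
  then show ?thesis using nN by (rule dvd_trans[rotated])
qed

lemma phi_el: "int n dvd (phi (el i e) (el j f) - P i e j f)"
proof -
  have "phi (el i e) (el j f) - P i e j f =
     (if f then i mod int N - i else 0) - (if e then j mod int N - j else 0)"
    by (simp add: phi_def P_def kap_def eps_def rep_el)
  then show ?thesis using md[of i] md[of j] by (simp add: dvd_diff)
qed

lemma dvd3: "(k::int) dvd (a - a') \<Longrightarrow> k dvd (b - b') \<Longrightarrow> k dvd (c - c') \<Longrightarrow> k dvd (a' - b' - c') \<Longrightarrow> k dvd (a - b - c)"
proof -
  assume h: "k dvd (a - a')" "k dvd (b - b')" "k dvd (c - c')" "k dvd (a' - b' - c')"
  have "k dvd ((a - a') - (b - b') - (c - c') + (a' - b' - c'))"
    by (rule dvd_add[OF dvd_diff[OF dvd_diff[OF h(1) h(2)] h(3)] h(4)])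
  then show ?thesis by (simp add: algebra_simps)
qed

lemma ex_el: "x \<in> carrier G \<Longrightarrow> \<exists>i e. x = el i e"
  using surj by auto

lemma cross_left:
  assumes "x \<in> carrier G" "x' \<in> carrier G" "y \<in> carrier G"
  shows "int n dvd (phi (x \<otimes> x') y - phi (conjg G x x') (conjg G x y) - phi x y)"
proof -
  obtain i e i' e' j f where x: "x = el i e" and x': "x' = el i' e'" and y: "y = el j f"
    using ex_el assms by metis
  show ?thesis unfolding x x' y conjg_def el_mult el_inv
    apply (rule dvd3[OF phi_el phi_el phi_el])
    by (cases e; cases e'; cases f) (simp_all add: P_def algebra_simps)
qed

lemma cross_right:
  assumes "x \<in> carrier G" "y \<in> carrier G" "y' \<in> carrier G"
  shows "int n dvd (phi x (y \<otimes> y') - phi x y - phi (conjg G y x) (conjg G y y'))"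
proof -
  obtain i e j f j' f' where x: "x = el i e" and y: "y = el j f" and y': "y' = el j' f'"
    using ex_el assms by metis
  show ?thesis unfolding x y' y conjg_def el_mult el_inv
    apply (rule dvd3[OF phi_el phi_el phi_el])
    by (cases e; cases f; cases f') (simp_all add: P_def algebra_simps)
qed

end



context dq begin

definition val :: "'a \<times> 'a \<times> bool \<Rightarrow> int" where
  "val t = (case t of (x, y, b) \<Rightarrow> if x \<in> carrier G \<and> y \<in> carrier G then (if b then phi x y else - phi x y) else 0)"

definition wsum :: "('a \<times> 'a \<times> bool) list \<Rightarrow> int" where
  "wsum w = sum_list (map val w)"

lemma phi_diag: "phi x x = 0" by (simp add: phi_def)

lemma ext_inv: "ext_eq G u w \<Longrightarrow> int n dvd (wsum u - wsum w)"
proof (induction rule: ext_eq.induct)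
  case (refl w) then show ?case by simp
next
  case (sym u w) then show ?case by (simp add: dvd_diff_commute)
next
  case (trans u v w)
  have "int n dvd ((wsum u - wsum v) + (wsum v - wsum w))"
    using \<open>int n dvd wsum u - wsum v\<close> \<open>int n dvd wsum v - wsum w\<close> by (rule dvd_add)
  then show ?case by simp
next
  case (cong u w p q) then show ?case by (simp add: wsum_def)
next
  case (cancel1 x y) then show ?case by (simp add: wsum_def val_def)
next
  case (cancel2 x y) then show ?case by (simp add: wsum_def val_def)
next
  case (rel_left x x' y)
  then show ?case using cross_left[of x x' y] by (simp add: wsum_def val_def algebra_simps)
next
  case (rel_right x y y')
  then show ?case using cross_right[of x y y'] by (simp add: wsum_def val_def algebra_simps)
next
  case (rel_diag x) then show ?case by (simp add: wsum_def val_def phi_diag)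
qed

lemma wt_dvd: "x \<in> carrier G \<Longrightarrow> y \<in> carrier G \<Longrightarrow> wedge_trivial G x y \<Longrightarrow> int n dvd phi x y"
  unfolding wedge_trivial_def using ext_inv by (fastforce simp: wsum_def val_def)

lemma el_F: "el i False = r [^] i" by (simp add: el_def)

lemma u2: "el i True [^] (2 * q) = el (int n * q) False"
proof -
  have "el i True [^] (2::int) = el i True \<otimes> el i True"
    using int_pow_int[of G "el i True" 2] by (simp add: numeral_2_eq_2)
  also have "\<dots> = r [^] (int n)" by (simp add: el_mult el_F)
  finally have "el i True [^] (2 * q) = (r [^] (int n)) [^] q"
    by (simp add: int_pow_pow[symmetric])
  then show ?thesis by (simp add: int_pow_pow el_F)
qed

lemma u21: "el i True [^] (2 * q + 1) = el (int n * q + i) True"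
  by (simp add: int_pow_mult u2 el_mult)

lemma dvd_wt: "x \<in> carrier G \<Longrightarrow> y \<in> carrier G \<Longrightarrow> int n dvd phi x y \<Longrightarrow> wedge_trivial G x y"
proof -
  assume xc: "x \<in> carrier G" and yc: "y \<in> carrier G" and d: "int n dvd phi x y"
  obtain i e j f where x: "x = el i e" and y: "y = el j f" using ex_el xc yc by metis
  have d': "int n dvd phi (el i e) (el j f)" using d x y by simp
  have "int n dvd (phi (el i e) (el j f) - (phi (el i e) (el j f) - P i e j f))"
    by (rule dvd_diff[OF d' phi_el])
  then have dP: "int n dvd P i e j f" by simp
  show ?thesis unfolding wedge_trivial_def x y
  proof (cases e; cases f)
    assume "\<not> e" "\<not> f" then show "ext_eq G [(el i e, el j f, True)] []"
      using cyc_int[OF fin r, of i j] by (simp add: el_F)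
  next
    assume e: "\<not> e" and f: f
    then have "int n dvd i" using dP by (simp add: P_def)
    then obtain q where q: "i = int n * q" by (auto elim: dvdE)
    have "el i e = el j True [^] (2 * q)" "el j f = el j True [^] (1::int)" using e f by (simp_all add: u2 q)
    then show "ext_eq G [(el i e, el j f, True)] []" using cyc_int[OF fin, of "el j True" "2 * q" 1] by simp
  next
    assume e: e and f: "\<not> f"
    then have "int n dvd j" using dP by (simp add: P_def)
    then obtain q where q: "j = int n * q" by (auto elim: dvdE)
    have "el j f = el i True [^] (2 * q)" "el i e = el i True [^] (1::int)" using e f by (simp_all add: u2 q)
    then show "ext_eq G [(el i e, el j f, True)] []" using cyc_int[OF fin, of "el i True" 1 "2 * q"] by simp
  next
    assume e: e and f: f
    then have "int n dvd (i - j)" using dP by (simp add: P_def)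
    then obtain q where q: "i - j = int n * q" by (auto elim: dvdE)
    then have jq: "j = int n * (-q) + i" by (simp add: algebra_simps)
    have "el j f = el i True [^] (2 * (-q) + 1)" "el i e = el i True [^] (1::int)"
      using e f by (simp_all only: u21 jq) simp_all
    then show "ext_eq G [(el i e, el j f, True)] []" using cyc_int[OF fin, of "el i True" 1 "2 * (-q) + 1"] by simp
  qed
qed

lemma wt_iff: "x \<in> carrier G \<Longrightarrow> y \<in> carrier G \<Longrightarrow> wedge_trivial G x y \<longleftrightarrow> int n dvd phi x y"
  using wt_dvd dvd_wt by blast

end



lemma cnt_dvd:
  fixes d M a :: int
  assumes d: "d > 0" and dM: "d dvd M" and M: "M \<ge> 0"
  shows "card {j \<in> {0..<M}. d dvd (j - a)} = nat (M div d)"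
proof -
  obtain K where K: "M = d * K" using dM by (auto elim: dvdE)
  have MK: "M div d = K" using K d by simp
  have K0: "K \<ge> 0" using K d M by (simp add: zero_le_mult_iff)
  have eq: "{j \<in> {0..<M}. d dvd (j - a)} = (\<lambda>t. a mod d + d * t) ` {0..<K}"
  proof (intro Set.set_eqI iffI)
    fix j assume j: "j \<in> {j \<in> {0..<M}. d dvd (j - a)}"
    then have jm: "j mod d = a mod d" by (simp add: mod_eq_dvd_iff)
    have je: "j = a mod d + d * (j div d)" using jm by (metis add.commute div_mult_mod_eq mult.commute)
    have "j div d \<ge> 0" using j d by (simp add: pos_imp_zdiv_nonneg_iff)
    moreover have "j div d < K"
    proof -
      have "d * (j div d) \<le> j" using d by (simp add: mult.commute pos_mod_sign minus_mod_eq_mult_div[symmetric])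
      also have "j < d * K" using j K by simp
      finally show ?thesis using d by simp
    qed
    ultimately show "j \<in> (\<lambda>t. a mod d + d * t) ` {0..<K}" using je by (intro image_eqI[of _ _ "j div d"]) auto
  next
    fix j assume "j \<in> (\<lambda>t. a mod d + d * t) ` {0..<K}"
    then obtain t where t: "0 \<le> t" "t < K" and jt: "j = a mod d + d * t" by auto
    have "0 \<le> a mod d" "a mod d < d" using d by simp_all
    moreover have "d * t + d \<le> d * K" using t d by (metis add.commute mult.commute mult_left_mono order_less_imp_le zless_imp_add1_zle distrib_left mult.right_neutral)
    moreover have "0 \<le> d * t" using t d by simp
    ultimately have "0 \<le> j" "j < M" using jt K by linarith+
    moreover have "d dvd (j - a)"
    proof -
      have "j - a = d * (t - a div d)" using jt by (simp add: algebra_simps minus_mod_eq_mult_div[symmetric])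
      then show ?thesis by simp
    qed
    ultimately show "j \<in> {j \<in> {0..<M}. d dvd (j - a)}" by simp
  qed
  have "inj_on (\<lambda>t. a mod d + d * t) {0..<K}" using d by (intro inj_onI) simp
  then show ?thesis using eq MK by (simp add: card_image)
qed

lemma dvd_mult_gcd:
  fixes n m i :: int
  assumes n: "n > 0"
  shows "n dvd i * m \<longleftrightarrow> (n div gcd m n) dvd i"
proof -
  define g where "g = gcd m n"
  have g0: "g > 0" using n by (simp add: g_def)
  obtain n' where n': "n = g * n'" unfolding g_def by (metis gcd_dvd2 dvdE)
  obtain m' where m': "m = g * m'" unfolding g_def by (metis gcd_dvd1 dvdE)
  have cop: "coprime n' m'"
  proof -
    have "coprime (n div g) (m div g)" unfolding g_def using n
      by (metis div_gcd_coprime gcd.commute less_irrefl)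
    then show ?thesis using n' m' g0 by simp
  qed
  have "n dvd i * m \<longleftrightarrow> g * n' dvd g * (i * m')" using n' m' by (simp add: algebra_simps)
  also have "\<dots> \<longleftrightarrow> n' dvd i * m'" using g0 by simp
  also have "\<dots> \<longleftrightarrow> n' dvd i" using cop by (simp add: coprime_dvd_mult_left_iff)
  moreover have nd: "n div g = n'" using n' g0 by simp
  ultimately show ?thesis unfolding g_def by simp
qed

lemma cnt_gcd:
  fixes M n m :: int
  assumes n: "n > 0" and nM: "n dvd M" and M: "M \<ge> 0"
  shows "card {i \<in> {0..<M}. n dvd i * m} = nat (M div (n div gcd m n))"
proof -
  have d0: "n div gcd m n > 0" using n
    by (metis div_pos_pos_trivial gcd_dvd2 gcd_pos_int less_irrefl not_less zdiv_eq_0_iff dvd_imp_le pos_imp_zdiv_pos_iff zdvd_imp_le)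
  have dM: "(n div gcd m n) dvd M" using nM by (metis dvd_div_mult_self dvd_trans dvd_triv_left gcd_dvd2 mult.commute)
  have "{i \<in> {0..<M}. n dvd i * m} = {j \<in> {0..<M}. (n div gcd m n) dvd (j - 0)}"
    using dvd_mult_gcd[OF n] by simp
  then show ?thesis using cnt_dvd[OF d0 dM M, of 0] by simp
qed




context dq begin

lemma el_pow: "el i e [^] (m::nat) = (if e then (if even m then el (int n * int (m div 2)) False
    else el (int n * int (m div 2) + i) True) else el (i * int m) False)"
proof (cases e)
  case False
  have "el i e [^] m = (r [^] i) [^] (int m)" using False by (simp add: el_F int_pow_int)
  also have "\<dots> = el (i * int m) False" by (simp add: int_pow_pow el_F)
  finally show ?thesis using False by simp
next
  case True
  have "el i e [^] m = el i True [^] (int m)" using True by (simp add: int_pow_int)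
  also have "\<dots> = (if even m then el (int n * int (m div 2)) False else el (int n * int (m div 2) + i) True)"
  proof (cases "even m")
    case True
    then have "int m = 2 * int (m div 2)" by (auto elim!: evenE)
    then show ?thesis using True u2 by simp
  next
    case False
    then have "int m = 2 * int (m div 2) + 1" by (auto elim!: oddE)
    then show ?thesis using False u21 by simp
  qed
  finally show ?thesis using True by simp
qed

definition Cnd :: "nat \<Rightarrow> int \<Rightarrow> bool \<Rightarrow> int \<Rightarrow> bool \<Rightarrow> int" where
  "Cnd m i e j f = (if e then (if even m then 0 else P i True j f) else (if f then i * int m else 0))"

lemma pow_phi: "int n dvd (phi (el i e [^] m) (el j f) - Cnd m i e j f)"
proof -
  obtain A B where AB: "el i e [^] m = el A B"
    "A = (if e then (if even m then int n * int (m div 2) else int n * int (m div 2) + i) else i * int m)"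
    "B = (e \<and> odd m)"
    by (simp add: el_pow)
  have "int n dvd (P A B j f - Cnd m i e j f)"
    using AB(2,3) by (cases e; cases f; cases "even m") (simp_all add: P_def Cnd_def)
  from dvd_add[OF phi_el[of A B j f] this] show ?thesis using AB(1) by simp
qed

definition S where "S m = {(x, y). x \<in> carrier G \<and> y \<in> carrier G \<and> wedge_trivial G (x [^] m) y}"
definition T where "T m = {(p, q). p \<in> I \<and> q \<in> I \<and> int n dvd Cnd m (fst p) (snd p) (fst q) (snd q)}"

lemma dvd_iff_sub: "(k::int) dvd (a - b) \<Longrightarrow> k dvd a \<longleftrightarrow> k dvd b"
  by (metis dvd_add_right_iff diff_add_cancel add.commute)

lemma S_eq: "S m = map_prod (case_prod el) (case_prod el) ` T m"
proof (intro Set.set_eqI iffI)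
  fix z assume "z \<in> S m"
  then obtain x y where z: "z = (x, y)" and x: "x \<in> carrier G" and y: "y \<in> carrier G"
    and w: "wedge_trivial G (x [^] m) y" by (auto simp: S_def)
  obtain p q where p: "p \<in> I" "x = case_prod el p" and q: "q \<in> I" "y = case_prod el q"
    using x y surj by auto
  obtain i e j f where pq: "p = (i, e)" "q = (j, f)" by fastforce
  have "int n dvd phi (x [^] m) y" using wt_iff[of "x [^] m" y] x y w by simp
  then have "int n dvd Cnd m i e j f"
    using dvd_iff_sub[OF pow_phi[of i e m j f]] p q pq by simp
  then show "z \<in> map_prod (case_prod el) (case_prod el) ` T m"
    using p q pq z by (intro image_eqI[of _ _ "(p, q)"]) (auto simp: T_def)
next
  fix z assume "z \<in> map_prod (case_prod el) (case_prod el) ` T m"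
  then obtain i e j f where z: "z = (el i e, el j f)" and I: "(i, e) \<in> I" "(j, f) \<in> I"
    and c: "int n dvd Cnd m i e j f" by (auto simp: T_def)
  have "int n dvd phi (el i e [^] m) (el j f)"
    using dvd_iff_sub[OF pow_phi[of i e m j f]] c by simp
  then have "wedge_trivial G (el i e [^] m) (el j f)" using wt_iff by simp
  then show "z \<in> S m" using z by (simp add: S_def)
qed

lemma card_S: "card (S m) = card (T m)"
proof -
  have "inj_on (map_prod (case_prod el) (case_prod el)) (I \<times> I)"
    by (intro map_prod_inj_on inj)
  moreover have "T m \<subseteq> I \<times> I" by (auto simp: T_def)
  ultimately show ?thesis unfolding S_eq by (intro card_image) (rule inj_on_subset)
qed

end



context dq begin

lemma finR: "finite {j \<in> {0..<int N}. Q j}"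
  by (rule finite_subset[of _ "{0..<int N}"]) auto

lemma cardR[simp]: "card {j. 0 \<le> j \<and> j < int N} = N"
proof -
  have "{j. 0 \<le> j \<and> j < int N} = {0..<int N}" by auto
  then show ?thesis by simp
qed

lemma cardI_split: "card {q \<in> I. Q q} = card {j \<in> {0..<int N}. Q (j, False)} + card {j \<in> {0..<int N}. Q (j, True)}"
proof -
  have e: "{q \<in> I. Q q} = (\<lambda>j. (j, False)) ` {j \<in> {0..<int N}. Q (j, False)} \<union> (\<lambda>j. (j, True)) ` {j \<in> {0..<int N}. Q (j, True)}"
  proof (intro Set.set_eqI iffI)
    fix q assume "q \<in> {q \<in> I. Q q}"
    moreover obtain j b where "q = (j, b)" by fastforce
    ultimately show "q \<in> (\<lambda>j. (j, False)) ` {j \<in> {0..<int N}. Q (j, False)} \<union> (\<lambda>j. (j, True)) ` {j \<in> {0..<int N}. Q (j, True)}"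
      by (cases b) (auto simp: I_def)
  qed (auto simp: I_def)
  have "card {q \<in> I. Q q} = card ((\<lambda>j. (j, False)) ` {j \<in> {0..<int N}. Q (j, False)}) + card ((\<lambda>j. (j, True)) ` {j \<in> {0..<int N}. Q (j, True)})"
    unfolding e by (rule card_Un_disjoint) (auto intro!: finite_imageI finR simp del: atLeastLessThan_iff)
  also have "\<dots> = card {j \<in> {0..<int N}. Q (j, False)} + card {j \<in> {0..<int N}. Q (j, True)}"
    by (subst card_image, simp add: inj_on_def)+ simp
  finally show ?thesis .
qed

lemma sumI_split: "(\<Sum>p\<in>I. F p) = (\<Sum>i\<in>{0..<int N}. F (i, False)) + (\<Sum>i\<in>{0..<int N}. (F (i, True) :: nat))"
proof -
  have "(\<Sum>p\<in>I. F p) = (\<Sum>i\<in>{0..<int N}. \<Sum>b\<in>UNIV. F (i, b))"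
    unfolding I_def by (simp add: sum.cartesian_product)
  also have "\<dots> = (\<Sum>i\<in>{0..<int N}. F (i, False) + F (i, True))"
    by (simp add: UNIV_bool add.commute)
  finally show ?thesis by (simp add: sum.distrib)
qed

definition k :: nat where "k = N div n"
lemma Nk: "N = k * n" using Nn by (auto simp: k_def)
lemma n0: "int n > 0" using n1 by simp

lemma cnt_n: "card {j \<in> {0..<int N}. int n dvd (j - a)} = k"
  using cnt_dvd[OF n0 nN, of a] by (simp add: k_def zdiv_int[symmetric])

lemma card_T: "card (T m) = (\<Sum>i\<in>{0..<int N}. N + (if int n dvd i * int m then N else 0))
   + N * (if even m then 2 * N else 2 * k)"
proof -
  have "T m = Sigma I (\<lambda>p. {q \<in> I. int n dvd Cnd m (fst p) (snd p) (fst q) (snd q)})"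
    by (auto simp: T_def)
  then have "card (T m) = (\<Sum>p\<in>I. card {q \<in> I. int n dvd Cnd m (fst p) (snd p) (fst q) (snd q)})"
    using finI by (simp add: card_SigmaI)
  also have "\<dots> = (\<Sum>i\<in>{0..<int N}. N + (if int n dvd i * int m then N else 0))
   + (\<Sum>i\<in>{0..<int N}. (if even m then 2 * N else 2 * k))"
  proof -
    have a: "card {q \<in> I. int n dvd Cnd m i False (fst q) (snd q)} = N + (if int n dvd i * int m then N else 0)" for i
      unfolding cardI_split by (simp add: Cnd_def)
    have b: "card {q \<in> I. int n dvd Cnd m i True (fst q) (snd q)} = (if even m then 2 * N else 2 * k)" for i
    proof (cases "even m")
      case True then show ?thesis unfolding cardI_split by (simp add: Cnd_def)
    next
      case False
      have "{j \<in> {0..<int N}. int n dvd Cnd m i True j False} = {j \<in> {0..<int N}. int n dvd (j - 0)}"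
        using False by (simp add: Cnd_def P_def)
      moreover have "{j \<in> {0..<int N}. int n dvd Cnd m i True j True} = {j \<in> {0..<int N}. int n dvd (j - i)}"
        using False by (auto simp: Cnd_def P_def dvd_diff_commute)
      ultimately show ?thesis unfolding cardI_split using False cnt_n[of 0] cnt_n[of i] by simp
    qed
    show ?thesis by (subst sumI_split) (simp only: fst_conv snd_conv a b)
  qed
  finally show ?thesis by simp
qed

end



context dq begin

lemma k1: "k \<ge> 1" using Nk N1 by (cases k) auto

lemma card_gcd: "card {i \<in> {0..<int N}. int n dvd i * int m} = k * gcd m n"
proof -
  define g where "g = gcd m n"
  have gi: "gcd (int m) (int n) = int g" by (simp add: g_def)
  have gn: "g dvd n" by (simp add: g_def)
  then obtain d where d: "n = g * d" by (auto elim: dvdE)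
  have g0: "g > 0" using n1 by (simp add: g_def)
  have d0: "d > 0" using d n1 by (cases d) auto
  have "int n div int g = int d" using d g0 by simp
  moreover have "int N = int d * (int k * int g)"
  proof -
    have h1: "int N = int k * int n" using arg_cong[OF Nk, of int] by simp
    have h2: "int n = int g * int d" using d by simp
    show ?thesis using h1 h2 by (simp add: algebra_simps)
  qed
  ultimately have "int N div (int n div gcd (int m) (int n)) = int k * int g" using d0 gi by simp
  then have "card {i \<in> {0..<int N}. int n dvd i * int m} = nat (int k * int g)"
    using cnt_gcd[OF n0 nN, of "int m"] by simp
  also have "\<dots> = k * g" by (metis nat_int of_nat_mult)
  finally show ?thesis by (simp add: g_def)
qed

lemma sum_part: "(\<Sum>i\<in>{0..<int N}. N + (if int n dvd i * int m then N else 0)) = N * N + N * (k * gcd m n)"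
proof -
  have "(\<Sum>i\<in>{0..<int N}. (if int n dvd i * int m then N else 0)) = (\<Sum>i\<in>{i \<in> {0..<int N}. int n dvd i * int m}. N)"
    by (rule sum.inter_filter[symmetric]) simp
  also have "\<dots> = N * (k * gcd m n)" using card_gcd[of m] by simp
  finally show ?thesis by (simp add: sum.distrib)
qed

lemma degree: "ext_degree m G = (if even m then (3 * real n + real (gcd m n)) / (4 * real n)
            else (real n + real (gcd m n) + 2) / (4 * real n))"
proof -
  have e: "ext_degree m G = real (card (S m)) / real (2 * N) ^ 2"
    unfolding ext_degree_def S_def cardG ..
  have c: "card (S m) = N * N + N * (k * gcd m n) + N * (if even m then 2 * N else 2 * k)"
    unfolding card_S card_T sum_part ..
  have kp: "real k > 0" using k1 by simp
  have np: "real n > 0" using n1 by simp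
  have rN: "real N = real k * real n" using arg_cong[OF Nk, of real] by simp
  show ?thesis unfolding e c using kp np rN
    by (cases "even m") (simp_all add: field_simps power2_eq_square)
qed

end



lemma Q_dq:
  fixes Q :: "('a, 'b) monoid_scheme" and n :: nat and a b :: 'a
  assumes "n \<ge> 1"
    and "group Q" and "a \<in> carrier Q" and "b \<in> carrier Q"
    and "carrier Q = generate Q {a, b}"
    and "a [^]\<^bsub>Q\<^esub> n = b [^]\<^bsub>Q\<^esub> (2::nat)"
    and "b [^]\<^bsub>Q\<^esub> (2::nat) = (a \<otimes>\<^bsub>Q\<^esub> b) [^]\<^bsub>Q\<^esub> (2::nat)"
    and "card (carrier Q) = 4 * n"
  shows "dq Q a b (2 * n) n"
proof -
  interpret group Q by fact
  have a: "a \<in> carrier Q" and b: "b \<in> carrier Q" by fact+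
  have bb: "b \<otimes>\<^bsub>Q\<^esub> b = a \<otimes>\<^bsub>Q\<^esub> b \<otimes>\<^bsub>Q\<^esub> a \<otimes>\<^bsub>Q\<^esub> b"
    using assms(7) a b by (simp add: numeral_2_eq_2 m_assoc)
  then have "b = a \<otimes>\<^bsub>Q\<^esub> b \<otimes>\<^bsub>Q\<^esub> a" using a b by simp
  then have sr: "b \<otimes>\<^bsub>Q\<^esub> a = inv\<^bsub>Q\<^esub> a \<otimes>\<^bsub>Q\<^esub> b"
    using a b by (simp add: inv_solve_left m_assoc)
  have an: "a [^]\<^bsub>Q\<^esub> n = b \<otimes>\<^bsub>Q\<^esub> b" using assms(6) b by (simp add: numeral_2_eq_2)
  have "b \<otimes>\<^bsub>Q\<^esub> a [^]\<^bsub>Q\<^esub> n = inv\<^bsub>Q\<^esub> (a [^]\<^bsub>Q\<^esub> n) \<otimes>\<^bsub>Q\<^esub> b"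
    by (rule sr_pow_nat[OF a b sr])
  then have "b \<otimes>\<^bsub>Q\<^esub> b \<otimes>\<^bsub>Q\<^esub> b = inv\<^bsub>Q\<^esub> (b \<otimes>\<^bsub>Q\<^esub> b) \<otimes>\<^bsub>Q\<^esub> b"
    using an b by (simp add: m_assoc)
  then have "b \<otimes>\<^bsub>Q\<^esub> b = inv\<^bsub>Q\<^esub> (b \<otimes>\<^bsub>Q\<^esub> b)" using b by simp
  then have "(b \<otimes>\<^bsub>Q\<^esub> b) \<otimes>\<^bsub>Q\<^esub> (b \<otimes>\<^bsub>Q\<^esub> b) = \<one>\<^bsub>Q\<^esub>" using b
    by (metis m_closed r_inv)
  then have rN: "a [^]\<^bsub>Q\<^esub> (2 * n) = \<one>\<^bsub>Q\<^esub>"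
    using an a by (simp add: mult_2 nat_pow_mult[symmetric])
  show ?thesis
    by (unfold_locales) (use assms sr rN in auto)
qed

lemma D_dq:
  fixes D :: "('c, 'd) monoid_scheme" and n :: nat and c d :: 'c
  assumes "n \<ge> 1"
    and "group D" and "c \<in> carrier D" and "d \<in> carrier D"
    and "carrier D = generate D {c, d}"
    and "c [^]\<^bsub>D\<^esub> n = \<one>\<^bsub>D\<^esub>"
    and "d [^]\<^bsub>D\<^esub> (2::nat) = \<one>\<^bsub>D\<^esub>"
    and "inv\<^bsub>D\<^esub> d \<otimes>\<^bsub>D\<^esub> c \<otimes>\<^bsub>D\<^esub> d = inv\<^bsub>D\<^esub> c"
    and "card (carrier D) = 2 * n"
  shows "dq D c d n n"
proof -
  interpret group D by fact
  have c: "c \<in> carrier D" and d: "d \<in> carrier D" by fact+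
  have dd: "d \<otimes>\<^bsub>D\<^esub> d = \<one>\<^bsub>D\<^esub>" using assms(7) d by (simp add: numeral_2_eq_2)
  then have id: "inv\<^bsub>D\<^esub> d = d" using d by (simp add: inv_equality)
  have h: "d \<otimes>\<^bsub>D\<^esub> c \<otimes>\<^bsub>D\<^esub> d = inv\<^bsub>D\<^esub> c" using assms(8) id by simp
  have "d \<otimes>\<^bsub>D\<^esub> c = d \<otimes>\<^bsub>D\<^esub> c \<otimes>\<^bsub>D\<^esub> d \<otimes>\<^bsub>D\<^esub> d" using c d dd by (simp add: m_assoc)
  also have "\<dots> = inv\<^bsub>D\<^esub> c \<otimes>\<^bsub>D\<^esub> d" using h by simp
  finally have sr: "d \<otimes>\<^bsub>D\<^esub> c = inv\<^bsub>D\<^esub> c \<otimes>\<^bsub>D\<^esub> d" .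
  show ?thesis
    by (unfold_locales) (use assms sr in auto)
qed

theorem mainTheorem13:
  fixes Q :: "('a, 'b) monoid_scheme" and D :: "('c, 'd) monoid_scheme"
    and n m :: nat and a b :: 'a and c d :: 'c
  assumes "n \<ge> 1" and "m \<ge> 1"
    and "group Q" and "a \<in> carrier Q" and "b \<in> carrier Q"
    and "carrier Q = generate Q {a, b}"
    and "a [^]\<^bsub>Q\<^esub> n = b [^]\<^bsub>Q\<^esub> (2::nat)"
    and "b [^]\<^bsub>Q\<^esub> (2::nat) = (a \<otimes>\<^bsub>Q\<^esub> b) [^]\<^bsub>Q\<^esub> (2::nat)"
    and "card (carrier Q) = 4 * n"
    and "group D" and "c \<in> carrier D" and "d \<in> carrier D"
    and "carrier D = generate D {c, d}"
    and "c [^]\<^bsub>D\<^esub> n = \<one>\<^bsub>D\<^esub>"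
    and "d [^]\<^bsub>D\<^esub> (2::nat) = \<one>\<^bsub>D\<^esub>"
    and "inv\<^bsub>D\<^esub> d \<otimes>\<^bsub>D\<^esub> c \<otimes>\<^bsub>D\<^esub> d = inv\<^bsub>D\<^esub> c"
    and "card (carrier D) = 2 * n"
  shows "ext_degree m Q =
           (if even m then (3 * real n + real (gcd m n)) / (4 * real n)
            else (real n + real (gcd m n) + 2) / (4 * real n))
         \<and> ext_degree m Q = ext_degree m D"
proof -
  interpret q: dq Q a b "2 * n" n by (rule Q_dq) (use assms in auto)
  interpret dd: dq D c d n n by (rule D_dq) (use assms in auto)
  show ?thesis using q.degree[of m] dd.degree[of m] by simp
qed


end
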